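(* Let $\beta>1$ and $U(x)=(|x|^2)^\beta$ on $\mathbb{R}^n$. Then for all $x,y\in\mathbb{R}^n$, $$\langle\nabla U(x)-\nabla U(y),x-y\rangle\ge 2\beta\,2^{3-3\beta}\,|x-y|^{2\beta}.$$ If $n=1$, the better bound $\langle\nabla U(x)-\nabla U(y),x-y\rangle\ge 2\beta\,2^{2-2\beta}|x-y|^{2\beta}$ holds. *)

theory Defs
  imports "HOL-Analysis.Analysis"
begin

end

theory Submission
  imports Defs
begin

lemma conv_mid:
  fixes t r q :: real
  assumes "t \<ge> 0" "r \<ge> 0" "q \<ge> 1"
  shows "((t+r)/2) powr q \<le> (t powr q + r powr q)/2"
proof (cases "t = 0 \<or> r = 0")
  case True
  have h: "(x/2) powr q \<le> x powr q / 2" if "x \<ge> 0" for x :: real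
  proof -
    have "(x/2) powr q = x powr q / 2 powr q" using that by (simp add: powr_divide)
    moreover have "2 powr q \<ge> 2" using assms(3) using powr_mono[of 1 q 2] by simp
    moreover have "x powr q \<ge> 0" by simp
    moreover have "x powr q / 2 powr q \<le> x powr q / 2"
      using \<open>2 powr q \<ge> 2\<close> by (intro divide_left_mono) auto
    ultimately show ?thesis by simp
  qed
  then show ?thesis using True assms by auto
next
  case False
  then have "t > 0" "r > 0" using assms by auto
  from convex_onD[OF powr_convex[OF assms(3)], of "1/2" t r] this
  show ?thesis by (simp add: field_simps)
qed

lemma key_ineq:
  fixes a b :: "'a::real_inner"
  assumes s: "s \<ge> 0"
  shows "inner (norm b powr s *\<^sub>R b - norm a powr s *\<^sub>R a) (b - a) \<ge> 2 powr (-s) * norm (b - a) powr (s + 2)"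
proof -
  define t where "t = norm b"
  define r where "r = norm a"
  define A where "A = t powr s"
  define B where "B = r powr s"
  define p where "p = inner a b"
  define d where "d = norm (b - a)"
  define m where "m = t + r"
  define c where "c = 2 powr (-s)"
  have t0: "t \<ge> 0" and r0: "r \<ge> 0" and d0: "d \<ge> 0" unfolding t_def r_def d_def by auto
  have LHS: "inner (norm b powr s *\<^sub>R b - norm a powr s *\<^sub>R a) (b - a) = A * t^2 - A * p - B * p + B * r^2"
    unfolding A_def B_def t_def r_def p_def
    by (simp add: inner_diff_left inner_diff_right power2_norm_eq_inner inner_commute algebra_simps)
  have dsq: "d^2 = t^2 + r^2 - 2 * p"
    unfolding d_def t_def r_def p_def
    by (simp add: power2_norm_eq_inner inner_diff_left inner_diff_right inner_commute)
  have two: "2 * inner (norm b powr s *\<^sub>R b - norm a powr s *\<^sub>R a) (b - a) = (A + B) * d^2 + (A - B) * (t^2 - r^2)"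
    unfolding LHS dsq by (simp add: algebra_simps)
  have gam: "(A - B) * (t^2 - r^2) \<ge> 0"
  proof (cases "t \<le> r")
    case True
    then have "A \<le> B" unfolding A_def B_def using t0 s by (simp add: powr_mono2)
    moreover have "t^2 \<le> r^2" using True t0 by (simp add: power_mono)
    ultimately show ?thesis by (simp add: mult_nonpos_nonpos)
  next
    case False
    then have "B \<le> A" unfolding A_def B_def using r0 s by (simp add: powr_mono2)
    moreover have "r^2 \<le> t^2" using False r0 by (simp add: power_mono)
    ultimately show ?thesis by simp
  qed
  have dm: "d \<le> m" unfolding d_def m_def t_def r_def by (rule norm_triangle_ineq4)
  have m0: "m \<ge> 0" using t0 r0 m_def by simp
  have At: "A * t = t powr (s+1)" unfolding A_def using t0 by (simp add: powr_add)
  have Br: "B * r = r powr (s+1)" unfolding B_def using r0 by (simp add: powr_add)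
  have end1: "(A + B) * m^2 + (A - B) * (t^2 - r^2) = 2 * m * (t powr (s+1) + r powr (s+1))"
    unfolding At[symmetric] Br[symmetric] m_def by (simp add: algebra_simps power2_eq_square)
  have cv: "c * m powr (s+1) \<le> t powr (s+1) + r powr (s+1)"
  proof -
    have "(m/2) powr (s+1) \<le> (t powr (s+1) + r powr (s+1))/2"
      using conv_mid[OF t0 r0, of "s+1"] s m_def by simp
    moreover have "(m/2) powr (s+1) = m powr (s+1) / (2 * 2 powr s)"
      using m0 by (simp add: powr_divide powr_add)
    moreover have "c = 1 / 2 powr s" unfolding c_def by (simp add: powr_minus_divide)
    ultimately have "c * m powr (s+1) = 2 * (m/2) powr (s+1)" by simp
    then show ?thesis using \<open>(m/2) powr (s+1) \<le> _\<close> by simp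
  qed
  define K where "K = 2 * c * m powr s"
  have mK: "K * m^2 \<le> (A + B) * m^2 + (A - B) * (t^2 - r^2)"
  proof -
    have "K * m^2 = 2 * m * (c * m powr (s+1))"
      unfolding K_def using m0 by (simp add: powr_add power2_eq_square)
    also have "\<dots> \<le> 2 * m * (t powr (s+1) + r powr (s+1))"
      using cv m0 by (simp add: mult_left_mono)
    finally show ?thesis using end1 by simp
  qed
  have dK: "K * d^2 \<le> (A + B) * d^2 + (A - B) * (t^2 - r^2)"
  proof (cases "A + B \<ge> K")
    case True
    then show ?thesis using gam by (simp add: mult_right_mono add_increasing2)
  next
    case False
    have "d^2 \<le> m^2" using dm d0 by (simp add: power_mono)
    then have "(A + B - K) * m^2 \<le> (A + B - K) * d^2" using False
      by (simp add: mult_left_mono_neg)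
    then show ?thesis using mK by (simp add: algebra_simps)
  qed
  have cd: "2 * c * d powr (s+2) \<le> K * d^2"
  proof -
    have "d powr s \<le> m powr s" using dm d0 s by (simp add: powr_mono2)
    moreover have "d powr (s+2) = d powr s * d^2" using d0 by (simp add: powr_add)
    moreover have "c \<ge> 0" unfolding c_def by simp
    ultimately show ?thesis unfolding K_def by (simp add: mult_right_mono mult_left_mono)
  qed
  show ?thesis using two dK cd unfolding c_def d_def by simp
qed

lemma sq_powr: fixes y c :: real assumes "y \<ge> 0" "c > 0" shows "(y^2) powr c = y powr (2*c)"
proof (cases "y = 0")
  case True then show ?thesis using assms by simp
next
  case False
  then have "y > 0" using assms by simp
  then have "y^2 = y powr 2" by (simp add: powr_realpow)
  then show ?thesis by (simp add: powr_powr mult.commute)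
qed

lemma grad_U:
  fixes \<beta> :: real and x :: "'a::real_inner"
  assumes "\<beta> > 1"
  shows "GDERIV (\<lambda>x. (norm x ^ 2) powr \<beta>) x :> (2*\<beta> * norm x powr (2*\<beta>-2)) *\<^sub>R x"
proof (cases "x = 0")
  case False
  have g1: "GDERIV (\<lambda>y. norm y ^ 2) x :> 2 *\<^sub>R x"
    unfolding gderiv_def power2_norm_eq_inner
    by (rule derivative_eq_intros | force simp add: inner_commute)+
  have "norm x ^ 2 > 0" using False by simp
  from GDERIV_DERIV_compose[OF g1 has_real_derivative_powr[OF this, of \<beta>]]
  have "GDERIV (\<lambda>y. (norm y ^ 2) powr \<beta>) x :> (\<beta> * (norm x ^ 2) powr (\<beta> - 1)) *\<^sub>R 2 *\<^sub>R x" .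
  moreover have "(norm x ^ 2) powr (\<beta> - 1) = norm x powr (2*\<beta>-2)"
    using sq_powr[of "norm x" "\<beta>-1"] assms by (simp add: algebra_simps)
  ultimately show ?thesis by (simp add: algebra_simps)
next
  case True
  have lim: "((\<lambda>h::'a. norm ((norm (x + h) ^ 2) powr \<beta> - (norm x ^ 2) powr \<beta> - inner h 0) / norm h) \<longlongrightarrow> 0) (at 0)"
  proof (rule Lim_transform_eventually)
    show "((\<lambda>h::'a. norm h powr (2*\<beta>-1)) \<longlongrightarrow> 0) (at 0)"
      by (rule tendsto_zero_powrI) (use assms in \<open>auto intro!: tendsto_eq_intros\<close>)
    have eq: "norm h powr (2*\<beta>-1) = norm ((norm (x + h) ^ 2) powr \<beta> - (norm x ^ 2) powr \<beta> - inner h 0) / norm h"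
      if "h \<noteq> 0" for h :: 'a
    proof -
      from that have h0: "norm h > 0" by simp
      have "(norm h ^ 2) powr \<beta> = norm h powr (2*\<beta>)" using sq_powr[of "norm h" \<beta>] assms by simp
      also have "\<dots> = norm h powr (2*\<beta>-1) * norm h"
      proof -
        have "norm h powr (2*\<beta>-1) * norm h powr 1 = norm h powr (2*\<beta>-1+1)" by (rule powr_add[symmetric])
        then show ?thesis using h0 by simp
      qed
      finally show ?thesis using True h0 assms by simp
    qed
    show "\<forall>\<^sub>F h in at (0::'a). norm h powr (2*\<beta>-1) = norm ((norm (x + h) ^ 2) powr \<beta> - (norm x ^ 2) powr \<beta> - inner h 0) / norm h"
      unfolding eventually_at_filter using eq by simp
  qed
  show ?thesis unfolding gderiv_def has_derivative_at using True lim
    by (simp add: bounded_linear_inner_left)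
qed

lemma gderiv_unique:
  assumes "GDERIV f x :> D1" "GDERIV f x :> D2" shows "D1 = D2"
proof -
  have fe: "(\<lambda>h. inner h D1) = (\<lambda>h. inner h D2)"
    using has_derivative_unique assms unfolding gderiv_def by blast
  then have "inner (D1 - D2) D1 = inner (D1 - D2) D2" using fun_cong[OF fe, of "D1 - D2"] by (simp add: inner_commute)
  then have "inner (D1 - D2) (D1 - D2) = 0" by (simp add: inner_diff_right)
  then show ?thesis by simp
qed

theorem proposition5p4:
  fixes \<beta> :: real and U :: "real ^ 'n \<Rightarrow> real"
  assumes "\<beta> > 1"
    and "U = (\<lambda>x. (norm x ^ 2) powr \<beta>)"
  shows "(\<forall>x. \<exists>D. GDERIV U x :> D)
    \<and> (\<forall>x y Dx Dy. GDERIV U x :> Dx \<longrightarrow> GDERIV U y :> Dy \<longrightarrow>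
          inner (Dx - Dy) (x - y) \<ge> 2 * \<beta> * 2 powr (3 - 3 * \<beta>) * norm (x - y) powr (2 * \<beta>))
    \<and> (CARD('n) = 1 \<longrightarrow>
        (\<forall>x y Dx Dy. GDERIV U x :> Dx \<longrightarrow> GDERIV U y :> Dy \<longrightarrow>
          inner (Dx - Dy) (x - y) \<ge> 2 * \<beta> * 2 powr (2 - 2 * \<beta>) * norm (x - y) powr (2 * \<beta>)))"
proof -
  define G where "G = (\<lambda>x::real^'n. (2*\<beta> * norm x powr (2*\<beta>-2)) *\<^sub>R x)"
  have gr: "GDERIV U x :> G x" for x unfolding G_def assms(2) by (rule grad_U[OF assms(1)])
  have main: "inner (Dx - Dy) (x - y) \<ge> 2 * \<beta> * 2 powr (2 - 2 * \<beta>) * norm (x - y) powr (2 * \<beta>)"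
    if "GDERIV U x :> Dx" "GDERIV U y :> Dy" for x y Dx Dy
  proof -
    have "Dx = G x" "Dy = G y" using gderiv_unique gr that by blast+
    define s where "s = 2*\<beta> - 2"
    have s0: "s \<ge> 0" using assms(1) s_def by simp
    have "Dx - Dy = (2*\<beta>) *\<^sub>R (norm x powr s *\<^sub>R x - norm y powr s *\<^sub>R y)"
      unfolding \<open>Dx = G x\<close> \<open>Dy = G y\<close> G_def s_def by (simp add: scaleR_diff_right)
    then have "inner (Dx - Dy) (x - y) = 2*\<beta> * inner (norm x powr s *\<^sub>R x - norm y powr s *\<^sub>R y) (x - y)"
      by simp
    moreover have "inner (norm x powr s *\<^sub>R x - norm y powr s *\<^sub>R y) (x - y) \<ge> 2 powr (-s) * norm (x - y) powr (s + 2)"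
      by (rule key_ineq[OF s0])
    moreover have "-s = 2 - 2*\<beta>" "s + 2 = 2*\<beta>" using s_def by auto
    ultimately show ?thesis using assms(1) by (simp add: mult_left_mono)
  qed
  have "2 powr (3 - 3 * \<beta>) \<le> 2 powr (2 - 2 * \<beta>)" using assms(1) by (intro powr_mono) auto
  then have "2 * \<beta> * 2 powr (3 - 3 * \<beta>) * norm (x - y) powr (2 * \<beta>) \<le> 2 * \<beta> * 2 powr (2 - 2 * \<beta>) * norm (x - y) powr (2 * \<beta>)" for x y :: "real^'n"
    using assms(1) by (intro mult_right_mono mult_left_mono) auto
  then show ?thesis using main gr by (meson order_trans)
qed

end
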